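(* For every integer $n\ge 2$, let $\mathcal{A}_n$ denote the set of Dyck $n$-paths whose terminal descent has even length and all of whose other descents to ground level (if any) have odd length. Then $|\mathcal{A}_n| = C_{n-1}$, where $C_m=\frac{1}{m+1}\binom{2m}{m}$ is the $m$-th Catalan number.
   Context: A Dyck $n$-path is a lattice path consisting of $n$ upsteps $U=(1,1)$ and $n$ downsteps $D=(1,-1)$ that starts and ends at height $0$ (ground level) and never goes below ground level. A descent is a maximal run of consecutive downsteps; its length is the number of downsteps in it. The terminal descent is the descent that ends at the final point of the path. A return is a downstep ending at ground level, and a descent to ground level is a descent whose last step is a return. *)

theory Defs
  imports Main
begin

text \<open>A lattice path is a list of steps: True = upstep U = (1,1), False = downstep D = (1,-1).\<close>

definition step_val :: "bool \<Rightarrow> int" where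
  "step_val s = (if s then 1 else -1)"

definition height :: "bool list \<Rightarrow> nat \<Rightarrow> int" where
  "height p k = sum_list (map step_val (take k p))"

definition dyck_path :: "nat \<Rightarrow> bool list \<Rightarrow> bool" where
  "dyck_path n p \<longleftrightarrow>
     length (filter (\<lambda>s. s) p) = n \<and> length (filter (\<lambda>s. \<not> s) p) = n \<and>
     (\<forall>k \<le> length p. height p k \<ge> 0) \<and> height p (length p) = 0"

definition dyck_paths :: "nat \<Rightarrow> bool list set" where
  "dyck_paths n = {p. dyck_path n p}"

text \<open>A descent is a maximal run of consecutive downsteps, occupying step positions
  i, ..., j-1 (0-based); its length is j - i.\<close>
definition is_descent :: "bool list \<Rightarrow> nat \<Rightarrow> nat \<Rightarrow> bool" where
  "is_descent p i j \<longleftrightarrow> i < j \<and> j \<le> length p \<and>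
     (\<forall>k. i \<le> k \<and> k < j \<longrightarrow> \<not> p ! k) \<and>
     (i = 0 \<or> p ! (i - 1)) \<and>
     (j = length p \<or> p ! j)"

definition is_terminal_descent :: "bool list \<Rightarrow> nat \<Rightarrow> nat \<Rightarrow> bool" where
  "is_terminal_descent p i j \<longleftrightarrow> is_descent p i j \<and> j = length p"

definition is_ground_descent :: "bool list \<Rightarrow> nat \<Rightarrow> nat \<Rightarrow> bool" where
  "is_ground_descent p i j \<longleftrightarrow> is_descent p i j \<and> height p j = 0"

definition A_set :: "nat \<Rightarrow> bool list set" where
  "A_set n = {p \<in> dyck_paths n.
      (\<exists>i. is_terminal_descent p i (length p) \<and> even (length p - i)) \<and>
      (\<forall>i j. is_ground_descent p i j \<and> j \<noteq> length p \<longrightarrow> odd (j - i))}"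

definition catalan :: "nat \<Rightarrow> nat" where
  "catalan m = ((2 * m) choose m) div (m + 1)"

end

theory Submission
  imports Defs Complex_Main
begin

definition hsum :: "bool list \<Rightarrow> int" where "hsum p = sum_list (map step_val p)"

lemma height_hsum: "height p k = hsum (take k p)"
  by (simp add: height_def hsum_def)

lemma hsum_append[simp]: "hsum (x @ y) = hsum x + hsum y"
  by (simp add: hsum_def)
lemma hsum_Cons[simp]: "hsum (s # y) = step_val s + hsum y"
  by (simp add: hsum_def)
lemma hsum_Nil[simp]: "hsum [] = 0"
  by (simp add: hsum_def)

lemma height_0[simp]: "height p 0 = 0"
  by (simp add: height_hsum)

lemma height_append: "height (x @ y) k = (if k \<le> length x then height x k else hsum x + height y (k - length x))"
  by (simp add: height_hsum)

lemma height_Cons: "height (s # y) k = (if k = 0 then 0 else step_val s + height y (k - 1))"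
  by (cases k) (simp_all add: height_hsum)

lemma height_len: "height p (length p) = hsum p"
  by (simp add: height_hsum)

lemma hsum_count: "hsum p = int (length (filter (\<lambda>s. s) p)) - int (length (filter (\<lambda>s. \<not> s) p))"
  by (induction p) (auto simp: step_val_def)

definition dyck :: "bool list \<Rightarrow> bool" where
  "dyck p \<longleftrightarrow> (\<forall>k \<le> length p. height p k \<ge> 0) \<and> hsum p = 0"

lemma dyck_path_iff: "dyck_path n p \<longleftrightarrow> dyck p \<and> length p = 2 * n"
proof -
  have l: "length (filter (\<lambda>s. s) p) + length (filter (\<lambda>s. \<not> s) p) = length p"
    by (rule sum_length_filter_compl)
  have "hsum p = 0 \<longleftrightarrow> length (filter (\<lambda>s. s) p) = length (filter (\<lambda>s. \<not> s) p)"
    using hsum_count[of p] by simp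
  moreover have "\<And>c1 c2 L H. c1 + c2 = L \<Longrightarrow> (c1 = n \<and> c2 = n \<and> H \<and> c1 = c2) \<longleftrightarrow> ((H \<and> c1 = c2) \<and> L = 2 * n)"
    by auto
  ultimately show ?thesis unfolding dyck_path_def dyck_def height_len using l by presburger
qed

lemma dyck_Nil[simp]: "dyck []"
  by (simp add: dyck_def height_hsum)

lemma dyck_append: "dyck x \<Longrightarrow> dyck y \<Longrightarrow> dyck (x @ y)"
  unfolding dyck_def by (auto simp: height_append)

lemma dyck_prime: "dyck a \<Longrightarrow> dyck (True # a @ [False])"
  unfolding dyck_def by (auto simp: height_append height_Cons step_val_def)

lemma dyck_build: "dyck a \<Longrightarrow> dyck r \<Longrightarrow> dyck (True # a @ False # r)"
  using dyck_append[OF dyck_prime] by (metis append_Cons append_assoc append_Cons append_Nil)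

lemma dyck_suffix: assumes "dyck a" "dyck (a @ s)" shows "dyck s"
  unfolding dyck_def
proof safe
  fix k assume k: "k \<le> length s"
  have "height (a @ s) (length a + k) \<ge> 0" using assms(2) k unfolding dyck_def by auto
  then show "height s k \<ge> 0" using assms(1) unfolding dyck_def
    by (auto simp: height_append split: if_splits)
next
  show "hsum s = 0" using assms unfolding dyck_def by simp
qed

lemma dyck_hd: assumes "dyck p" "p \<noteq> []" shows "hd p"
proof -
  have "height p 1 \<ge> 0" using assms unfolding dyck_def by (cases p) auto
  then show ?thesis using assms(2) by (cases p) (auto simp: height_Cons step_val_def height_hsum split: if_splits)
qed

lemma height_Suc: "j < length p \<Longrightarrow> height p (Suc j) = height p j + step_val (p ! j)"
  by (simp add: height_hsum take_Suc_conv_app_nth)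

lemma dyck_no_prefix: assumes "dyck a" "dyck (a @ False # u)" shows False
proof -
  have "height (a @ False # u) (Suc (length a)) \<ge> 0" using assms(2) unfolding dyck_def by auto
  then show False using assms(1) unfolding dyck_def by (simp add: height_append height_Cons step_val_def)
qed

lemma dyck_unique: assumes "dyck a" "dyck b" "a @ False # r = b @ False # s" shows "a = b \<and> r = s"
proof -
  from assms(3) obtain us where "(a = b @ us \<and> us @ False # r = False # s) \<or> (a @ us = b \<and> False # r = us @ False # s)"
    by (auto simp: append_eq_append_conv2)
  then show ?thesis
  proof
    assume h: "a = b @ us \<and> us @ False # r = False # s"
    show ?thesis
    proof (cases us)
      case Nil then show ?thesis using h by simp
    next
      case (Cons c us') then show ?thesis using h assms dyck_no_prefix[of b us'] by auto
    qed
  next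
    assume h: "a @ us = b \<and> False # r = us @ False # s"
    show ?thesis
    proof (cases us)
      case Nil then show ?thesis using h by simp
    next
      case (Cons c us') then show ?thesis using h assms dyck_no_prefix[of a us'] by auto
    qed
  qed
qed

lemma dyck_decomp: assumes "dyck p" "p \<noteq> []"
  shows "\<exists>a r. p = True # a @ False # r \<and> dyck a \<and> dyck r"
proof -
  define k where "k = (LEAST k. 0 < k \<and> height p k = 0)"
  have ex: "0 < length p \<and> height p (length p) = 0" using assms by (simp add: dyck_def height_len)
  have k1: "0 < k \<and> height p k = 0" unfolding k_def by (rule LeastI_ex) (use ex in blast)
  have kle: "k \<le> length p" unfolding k_def by (rule Least_le) (use ex in blast)
  have below: "height p j \<ge> 1" if "0 < j" "j < k" for j
  proof -
    have "height p j \<noteq> 0" using not_less_Least[of j "\<lambda>k. 0 < k \<and> height p k = 0"] that unfolding k_def by auto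
    moreover have "height p j \<ge> 0" using assms that kle unfolding dyck_def by auto
    ultimately show ?thesis by simp
  qed
  have h0: "hd p" using dyck_hd assms by blast
  have p0: "p ! 0" using h0 assms(2) by (simp add: hd_conv_nth)
  have hp1: "height p 1 = 1" using height_Suc[of 0 p] assms(2) p0 by (simp add: step_val_def)
  have k2: "k \<ge> 2" using k1 hp1 by (cases "k = 1") auto
  have hk1: "height p (k - 1) \<ge> 1" using below[of "k - 1"] k2 by auto
  have hk: "height p k = height p (k - 1) + step_val (p ! (k - 1))" using height_Suc[of "k - 1" p] k2 kle by simp
  have pk: "\<not> p ! (k - 1)" and hk1': "height p (k - 1) = 1"
    using hk hk1 k1 by (auto simp: step_val_def split: if_splits)
  define a where "a = take (k - 2) (tl p)"
  define r where "r = drop k p"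
  have la: "length a = k - 2" using kle k2 by (simp add: a_def)
  have peq: "p = True # a @ False # r"
  proof -
    obtain c t where pc: "p = c # t" using assms(2) by (cases p) auto
    have c: "c" using p0 pc by simp
    have "t = take (k - 2) t @ t ! (k - 2) # drop (k - 1) t"
    proof -
      have "k - 2 < length t" using kle k2 pc by simp
      then have "drop (k - 2) t = t ! (k - 2) # drop (Suc (k - 2)) t" by (rule Cons_nth_drop_Suc[symmetric])
      moreover have "Suc (k - 2) = k - 1" using k2 by simp
      ultimately show ?thesis by (metis append_take_drop_id)
    qed
    moreover have "t ! (k - 2) = False" using pk pc k2 by (cases k) (auto simp: numeral_2_eq_2)
    moreover have "drop (k - 1) t = r" using pc k2 by (simp add: r_def drop_Cons')
    ultimately show ?thesis using pc c by (simp add: a_def)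
  qed
  have "dyck a" unfolding dyck_def
  proof safe
    fix j assume j: "j \<le> length a"
    show "height a j \<ge> 0"
    proof (cases "j = 0")
      case False
      have "height p (Suc j) \<ge> 1" using below[of "Suc j"] j la k2 by auto
      then show ?thesis using j by (subst (asm) peq) (simp add: height_Cons height_append step_val_def)
    qed simp
  next
    have "height p (Suc (length a)) = 1" using hk1' la k2
      by (metis Suc_diff_Suc Suc_1 diff_Suc_1 less_le_trans lessI numeral_2_eq_2)
    then show "hsum a = 0" by (subst (asm) peq) (simp add: height_Cons height_append step_val_def height_len)
  qed
  moreover have "dyck r" unfolding dyck_def
  proof safe
    fix j assume j: "j \<le> length r"
    have "height p (Suc (Suc (length a)) + j) \<ge> 0" using assms(1) j peq unfolding dyck_def by auto
    then show "height r j \<ge> 0" using \<open>dyck a\<close> unfolding dyck_def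
      by (subst (asm) peq) (simp add: height_Cons height_append step_val_def)
  next
    show "hsum r = 0" using assms(1) \<open>dyck a\<close> peq unfolding dyck_def by (simp add: step_val_def)
  qed
  ultimately show ?thesis using peq by blast
qed

definition td :: "bool list \<Rightarrow> nat" where "td p = length (takeWhile (\<lambda>s. \<not> s) (rev p))"

lemma td_snoc_False[simp]: "td (y @ [False]) = Suc (td y)"
  by (simp add: td_def)

lemma td_Cons_True[simp]: "td (True # a) = td a"
  by (simp add: td_def takeWhile_append) (metis length_rev set_rev takeWhile_eq_all_conv)

lemma td_Nil[simp]: "td [] = 0" by (simp add: td_def)

lemma td_append: "True \<in> set y \<Longrightarrow> td (x @ y) = td y"
  unfolding td_def by (subst rev_append, subst takeWhile_append1[of True]) auto

lemma td_le: "td p \<le> length p"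
  unfolding td_def by (metis length_rev length_takeWhile_le)

lemma td_shape: "\<exists>w. p = w @ replicate (td p) False \<and> (w = [] \<or> last w)"
proof -
  define w where "w = rev (dropWhile (\<lambda>s. \<not> s) (rev p))"
  have "takeWhile (\<lambda>s. \<not> s) (rev p) = replicate (td p) False"
    unfolding td_def by (metis (full_types) replicate_length_same set_takeWhileD)
  then have "rev p = replicate (td p) False @ dropWhile (\<lambda>s. \<not> s) (rev p)"
    by (metis takeWhile_dropWhile_id)
  then have "p = w @ replicate (td p) False" unfolding w_def
    by (metis rev_append rev_replicate rev_rev_ident)
  moreover have "w = [] \<or> last w" unfolding w_def
    by (metis (full_types) hd_dropWhile last_rev rev_is_Nil_conv)
  ultimately show ?thesis by blast
qed

lemma desc_end: assumes "w = [] \<or> last w" "0 < t"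
  shows "is_descent (w @ replicate t False) i (length w + t) \<longleftrightarrow> i = length w"
proof
  assume d: "is_descent (w @ replicate t False) i (length w + t)"
  show "i = length w"
  proof (rule ccontr)
    assume "i \<noteq> length w"
    then consider "i < length w" | "i > length w" by linarith
    then show False
    proof cases
      case 1
      then have "w \<noteq> []" by auto
      then have "last w" using assms by auto
      moreover have "\<not> (w @ replicate t False) ! (length w - 1)" using d 1 unfolding is_descent_def
        by (metis Suc_pred' diff_less_Suc le_add1 le_neq_implies_less le_trans less_imp_le_nat
            linorder_not_less not_less_eq_eq zero_less_iff_neq_zero length_greater_0_conv \<open>w \<noteq> []\<close>)
      ultimately show False using \<open>w \<noteq> []\<close> by (simp add: nth_append last_conv_nth)
    next
      case 2
      then have "(w @ replicate t False) ! (i - 1)" using d unfolding is_descent_def by auto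
      moreover have "i - 1 < length w + t" using d unfolding is_descent_def by auto
      moreover have "\<not> i - 1 < length w" using 2 by arith
      ultimately show False by (simp add: nth_append)
    qed
  qed
next
  assume i: "i = length w"
  show "is_descent (w @ replicate t False) i (length w + t)"
    unfolding is_descent_def using i assms
    by (cases "w = []") (auto simp: nth_append last_conv_nth)
qed

lemma desc_terminal: assumes "x \<noteq> []" "\<not> last x"
  shows "is_descent x i (length x) \<longleftrightarrow> i = length x - td x"
proof -
  obtain w where w: "x = w @ replicate (td x) False" "w = [] \<or> last w" using td_shape by blast
  have "td x > 0"
  proof (rule ccontr)
    assume "\<not> td x > 0"
    then have "x = w" using w by simp
    then show False using w assms by auto
  qed
  have "is_descent x i (length x) \<longleftrightarrow> is_descent (w @ replicate (td x) False) i (length w + td x)"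
    by (subst (1 2) w(1)) simp
  also have "\<dots> \<longleftrightarrow> i = length w" using desc_end[OF w(2) \<open>td x > 0\<close>] .
  also have "length w = length x - td x" by (subst w(1)) simp
  finally show ?thesis .
qed

lemma desc_prefix: assumes "r = [] \<or> hd r"
  shows "is_descent (x @ r) i (length x) \<longleftrightarrow> is_descent x i (length x)"
  using assms unfolding is_descent_def
  by (cases r) (auto simp: nth_append)

lemma desc_shift: assumes "r \<noteq> []" "hd r"
  shows "is_descent (x @ r) (i + length x) (j + length x) \<longleftrightarrow> is_descent r i j"
proof -
  have r0: "r ! 0" using assms by (simp add: hd_conv_nth)
  show ?thesis
  proof (cases "i = 0")
    case True
    then show ?thesis using r0 unfolding is_descent_def by (auto simp: nth_append)
  next
    case False
    have A: "(\<forall>k. i + length x \<le> k \<and> k < j + length x \<longrightarrow> \<not> (x @ r) ! k) \<longleftrightarrow>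
             (\<forall>k. i \<le> k \<and> k < j \<longrightarrow> \<not> r ! k)"
    proof safe
      fix k assume h: "\<forall>k. i + length x \<le> k \<and> k < j + length x \<longrightarrow> \<not> (x @ r) ! k" "i \<le> k" "k < j" "r ! k"
      then show False using h(1)[rule_format, of "k + length x"] by (simp add: nth_append)
    next
      fix k assume h: "\<forall>k. i \<le> k \<and> k < j \<longrightarrow> \<not> r ! k" "i + length x \<le> k" "k < j + length x" "(x @ r) ! k"
      then show False using h(1)[rule_format, of "k - length x"] by (simp add: nth_append; linarith)
    qed
    have B: "(i + length x = 0 \<or> (x @ r) ! (i + length x - 1)) \<longleftrightarrow> (i = 0 \<or> r ! (i - 1))"
    proof -
      have "\<not> i + length x - 1 < length x" "i + length x - 1 - length x = i - 1" using False by arith+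
      then show ?thesis using False by (simp add: nth_append)
    qed
    have C: "(j + length x = length (x @ r) \<or> (x @ r) ! (j + length x)) \<longleftrightarrow> (j = length r \<or> r ! j)"
      by (simp add: nth_append)
    show ?thesis unfolding is_descent_def A B C by auto
  qed
qed

lemma desc_after: assumes "r \<noteq> []" "hd r" "is_descent (x @ r) i j" "length x < j"
  shows "length x < i"
proof (rule ccontr)
  assume "\<not> length x < i"
  then have "\<not> (x @ r) ! length x" using assms(3,4) unfolding is_descent_def by auto
  then show False using assms(1,2) by (simp add: nth_append hd_conv_nth)
qed

definition term_ok :: "bool list \<Rightarrow> bool" where
  "term_ok p \<longleftrightarrow> (\<exists>i. is_terminal_descent p i (length p) \<and> even (length p - i))"
definition gd_ok :: "bool list \<Rightarrow> bool" where
  "gd_ok p \<longleftrightarrow> (\<forall>i j. is_ground_descent p i j \<and> j \<noteq> length p \<longrightarrow> odd (j - i))"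

lemma A_set_alt: "A_set n = {p. dyck p \<and> length p = 2 * n \<and> term_ok p \<and> gd_ok p}"
  unfolding A_set_def dyck_paths_def term_ok_def gd_ok_def by (auto simp: dyck_path_iff)

lemma term_ok_iff: assumes "p \<noteq> []" "\<not> last p" shows "term_ok p \<longleftrightarrow> even (td p)"
proof -
  have "term_ok p \<longleftrightarrow> even (length p - (length p - td p))"
    unfolding term_ok_def is_terminal_descent_def using desc_terminal[OF assms] by auto
  then show ?thesis using td_le[of p] by simp
qed

lemma prime_height: assumes "dyck a" "0 < j" "j < length a + 2"
  shows "height (True # a @ [False]) j \<ge> 1"
  using assms unfolding dyck_def by (auto simp: height_Cons height_append step_val_def)

lemma gd_ok_prime: assumes "dyck a" shows "gd_ok (True # a @ [False])"
  unfolding gd_ok_def is_ground_descent_def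
proof (intro allI impI)
  fix i j assume "(is_descent (True # a @ [False]) i j \<and> height (True # a @ [False]) j = 0) \<and>
    j \<noteq> length (True # a @ [False])"
  then have h: "is_descent (True # a @ [False]) i j" "height (True # a @ [False]) j = 0"
    "j \<noteq> length (True # a @ [False])" by auto
  then have "0 < j" "j < length a + 2" unfolding is_descent_def by auto
  then have "height (True # a @ [False]) j \<ge> 1" using prime_height[OF assms] by blast
  then show "odd (j - i)" using h(2) by simp
qed

lemma gd_ok_cons: assumes "dyck a" "dyck r" "r \<noteq> []"
  shows "gd_ok (True # a @ False # r) \<longleftrightarrow> odd (Suc (td a)) \<and> gd_ok r"
proof -
  define x where "x = True # a @ [False]"
  have px: "True # a @ False # r = x @ r" by (simp add: x_def)
  have lx: "length x = length a + 2" by (simp add: x_def)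
  have tdx: "td x = Suc (td a)" using td_snoc_False[of "True # a"] by (simp add: x_def)
  have hr: "hd r" using dyck_hd assms by blast
  have "hsum a = 0" using assms(1) unfolding dyck_def by blast
  then have hsx: "hsum x = 0" by (simp add: x_def step_val_def)
  have xne: "x \<noteq> []" "\<not> last x" by (auto simp: x_def)
  have dx: "is_descent (x @ r) i (length x) \<longleftrightarrow> i = length x - td x" for i
    using desc_prefix[of r x i] desc_terminal[OF xne, of i] hr by auto
  show ?thesis unfolding px
  proof
    assume g: "gd_ok (x @ r)"
    have "is_ground_descent (x @ r) (length x - td x) (length x)"
      unfolding is_ground_descent_def using dx hsx by (simp add: height_append height_len)
    moreover have "length x \<noteq> length (x @ r)" using assms(3) by simp
    ultimately have "odd (length x - (length x - td x))"
      using g[unfolded gd_ok_def, rule_format, of "length x - td x" "length x"] by blast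
    then have o: "odd (Suc (td a))" using td_le[of x] tdx by simp
    have "gd_ok r" unfolding gd_ok_def
    proof (intro allI impI)
      fix i j assume "is_ground_descent r i j \<and> j \<noteq> length r"
      then have h: "is_ground_descent r i j" "j \<noteq> length r" by auto
      have "is_ground_descent (x @ r) (i + length x) (j + length x)"
        using h(1) desc_shift[OF assms(3) hr, of x i j] hsx unfolding is_ground_descent_def
        by (simp add: height_append height_len)
      moreover have "j + length x \<noteq> length (x @ r)" using h(2) by simp
      ultimately have "odd (j + length x - (i + length x))"
        using g[unfolded gd_ok_def, rule_format, of "i + length x" "j + length x"] by blast
      then show "odd (j - i)" by simp
    qed
    then show "odd (Suc (td a)) \<and> gd_ok r" using o by simp
  next
    assume g: "odd (Suc (td a)) \<and> gd_ok r"
    show "gd_ok (x @ r)" unfolding gd_ok_def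
    proof (intro allI impI)
      fix i j assume "is_ground_descent (x @ r) i j \<and> j \<noteq> length (x @ r)"
      then have h: "is_ground_descent (x @ r) i j" "j \<noteq> length (x @ r)" by auto
      have d: "is_descent (x @ r) i j" and hj: "height (x @ r) j = 0"
        using h(1) unfolding is_ground_descent_def by auto
      have "0 < j" using d unfolding is_descent_def by auto
      consider "j < length x" | "j = length x" | "j > length x" by linarith
      then show "odd (j - i)"
      proof cases
        case 1
        have "height (x @ r) j = height x j" using 1 by (simp add: height_append)
        moreover have "height x j \<ge> 1" using prime_height[OF assms(1) \<open>0 < j\<close>] 1 lx unfolding x_def by simp
        ultimately show ?thesis using hj by simp
      next
        case 2
        then have "i = length x - td x" using dx d by simp
        then show ?thesis using 2 g tdx td_le[of x] by simp
      next
        case 3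
        have "length x < i" using desc_after[OF assms(3) hr d 3] .
        then obtain i' j' where ij: "i = i' + length x" "j = j' + length x"
          using 3 by (metis add.commute less_imp_add_positive)
        have "is_descent r i' j'" using d desc_shift[OF assms(3) hr, of x i' j'] ij by simp
        moreover have "height r j' = 0" using hj ij hsx by (simp add: height_append height_len split: if_splits)
        moreover have "j' \<noteq> length r" using h(2) ij by simp
        ultimately have "odd (j' - i')" using g unfolding gd_ok_def is_ground_descent_def by auto
        then show ?thesis using ij by simp
      qed
    qed
  qed
qed

lemma dyck_last: assumes "dyck r" "r \<noteq> []" shows "\<not> last r"
proof -
  obtain y c where r: "r = y @ [c]" using assms(2) by (metis rev_exhaust)
  have "height r (length y) \<ge> 0" using assms(1) r unfolding dyck_def by auto
  moreover have "hsum r = 0" using assms(1) unfolding dyck_def by simp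
  ultimately show ?thesis using r by (auto simp: height_append height_len step_val_def split: if_splits)
qed

lemma dyck_True_in: "dyck r \<Longrightarrow> r \<noteq> [] \<Longrightarrow> True \<in> set r"
  using dyck_hd by (metis hd_in_set)

definition Aprop :: "bool list \<Rightarrow> bool" where "Aprop p \<longleftrightarrow> term_ok p \<and> gd_ok p"

lemma Aprop_prime: "dyck a \<Longrightarrow> Aprop (True # a @ [False]) \<longleftrightarrow> odd (td a)"
  unfolding Aprop_def using gd_ok_prime term_ok_iff[of "True # a @ [False]"] td_snoc_False[of "True # a"]
  by simp

lemma Aprop_cons: assumes "dyck a" "dyck r" "r \<noteq> []"
  shows "Aprop (True # a @ False # r) \<longleftrightarrow> even (td a) \<and> Aprop r"
proof -
  have t1: "td (True # a @ False # r) = td r"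
    using td_append[OF dyck_True_in[OF assms(2,3)], of "True # a @ [False]"] by simp
  have l1: "\<not> last (True # a @ False # r)" using dyck_last[OF assms(2,3)] assms(3) by simp
  have "term_ok (True # a @ False # r) \<longleftrightarrow> term_ok r"
    using term_ok_iff[OF _ l1] term_ok_iff[OF assms(3) dyck_last[OF assms(2,3)]] t1 by simp
  then show ?thesis unfolding Aprop_def using gd_ok_cons[OF assms] by auto
qed

lemma Aprop_even: "dyck r \<Longrightarrow> r \<noteq> [] \<Longrightarrow> Aprop r \<Longrightarrow> even (td r)"
  unfolding Aprop_def using term_ok_iff dyck_last by blast

lemma key_odd: "dyck s \<Longrightarrow> s \<noteq> [] \<Longrightarrow> dyck r \<Longrightarrow> r \<noteq> [] \<Longrightarrow> Aprop (s @ r) \<Longrightarrow> odd (td s)"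
proof (induction "length s" arbitrary: s rule: less_induct)
  case less
  obtain b t where s: "s = True # b @ False # t" "dyck b" "dyck t" using dyck_decomp less.prems by blast
  have e: "s @ r = True # b @ False # (t @ r)" using s by simp
  have "even (td b) \<and> Aprop (t @ r)"
    using Aprop_cons[OF s(2) dyck_append[OF s(3) less.prems(3)]] less.prems e by simp
  show ?case
  proof (cases "t = []")
    case True
    then show ?thesis using s \<open>even (td b) \<and> Aprop (t @ r)\<close> td_snoc_False[of "True # b"] by simp
  next
    case False
    have "odd (td t)" using less.hyps[of t] s False less.prems \<open>even (td b) \<and> Aprop (t @ r)\<close> by simp
    moreover have "td s = td t" using s td_append[OF dyck_True_in[OF s(3) False], of "True # b @ [False]"] by simp
    ultimately show ?thesis by simp
  qed
qed

lemma split_even: "dyck X \<Longrightarrow> X \<noteq> [] \<Longrightarrow> even (td X) \<Longrightarrow>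
  \<exists>e r. X = e @ r \<and> dyck e \<and> even (td e) \<and> dyck r \<and> r \<noteq> [] \<and> Aprop r"
proof (induction "length X" arbitrary: X rule: less_induct)
  case less
  obtain a Y where X: "X = True # a @ False # Y" "dyck a" "dyck Y" using dyck_decomp less.prems by blast
  show ?case
  proof (cases "Y = []")
    case True
    then have "odd (td a)" using X less.prems td_snoc_False[of "True # a"] by simp
    then have "Aprop X" using Aprop_prime X True by simp
    then show ?thesis using less.prems by (intro exI[of _ "[]"] exI[of _ X]) simp
  next
    case False
    have tY: "td X = td Y" using X td_append[OF dyck_True_in[OF X(3) False], of "True # a @ [False]"] by simp
    obtain e' r' where er: "Y = e' @ r'" "dyck e'" "even (td e')" "dyck r'" "r' \<noteq> []" "Aprop r'"
      using less.hyps[of Y] X False less.prems tY by auto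
    show ?thesis
    proof (cases "e' = []")
      case True
      show ?thesis
      proof (cases "even (td a)")
        case True
        then have "Aprop X" using Aprop_cons[OF X(2,3) False] er \<open>e' = []\<close> X by simp
        then show ?thesis using less.prems by (intro exI[of _ "[]"] exI[of _ X]) simp
      next
        case False
        then show ?thesis using er X \<open>e' = []\<close> dyck_prime[OF X(2)] td_snoc_False[of "True # a"]
          by (intro exI[of _ "True # a @ [False]"] exI[of _ r']) simp
      qed
    next
      case False
      have "td (True # a @ False # e') = td e'"
        using td_append[OF dyck_True_in[OF er(2) False], of "True # a @ [False]"] by simp
      then show ?thesis using er X dyck_build[OF X(2) er(2)]
        by (intro exI[of _ "True # a @ False # e'"] exI[of _ r']) simp
    qed
  qed
qed

definition phi :: "bool list \<Rightarrow> bool list" where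
  "phi p = (THE q. \<exists>a r. p = True # a @ False # r \<and> dyck a \<and> q = a @ r)"

lemma phi_eq: assumes "dyck a" shows "phi (True # a @ False # r) = a @ r"
  unfolding phi_def
proof (rule the_equality)
  show "\<exists>a' r'. True # a @ False # r = True # a' @ False # r' \<and> dyck a' \<and> a @ r = a' @ r'"
    using assms by blast
next
  fix q assume "\<exists>a' r'. True # a @ False # r = True # a' @ False # r' \<and> dyck a' \<and> q = a' @ r'"
  then obtain a' r' where h: "a @ False # r = a' @ False # r'" "dyck a'" "q = a' @ r'" by auto
  then show "q = a @ r" using dyck_unique[OF assms h(2) h(1)] by simp
qed

lemma inj_aux: assumes "dyck a" "dyck r" "dyck a'" "dyck r'"
  "Aprop (True # a @ False # r)" "Aprop (True # a' @ False # r')"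
  "a @ us = a'" "r = us @ r'"
  shows "a = a' \<and> r = r'"
proof (cases "us = []")
  case True then show ?thesis using assms by simp
next
  case False
  have dus: "dyck us" using dyck_suffix assms(1,3,7) by blast
  have r'ne: "r' \<noteq> []"
  proof
    assume "r' = []"
    then have "odd (td a')" using Aprop_prime assms(3,6) by simp
    moreover have "r \<noteq> []" using assms(8) False by simp
    then have "even (td a) \<and> Aprop r" using Aprop_cons assms(1,2,5) by blast
    then have "even (td r)" using Aprop_even assms(2) \<open>r \<noteq> []\<close> by blast
    moreover have "td a' = td us" using assms(7) td_append[OF dyck_True_in[OF dus False]] by blast
    moreover have "td r = td us" using assms(8) \<open>r' = []\<close> by simp
    ultimately show False by simp
  qed
  have "r \<noteq> []" using assms(8) False by simp
  then have Ar: "Aprop r" using Aprop_cons assms(1,2,5) by blast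
  have ea': "even (td a')" using Aprop_cons assms(3,4,6) r'ne by blast
  have "odd (td us)" using key_odd[OF dus False assms(4) r'ne] Ar assms(8) by simp
  moreover have "td a' = td us" using assms(7) td_append[OF dyck_True_in[OF dus False]] by blast
  ultimately show ?thesis using ea' by simp
qed

lemma bij_phi: assumes "n \<ge> 2" shows "bij_betw phi (A_set n) (dyck_paths (n - 1))"
  unfolding bij_betw_def
proof
  have dp: "dyck_paths m = {p. dyck p \<and> length p = 2 * m}" for m
    by (simp add: dyck_paths_def dyck_path_iff)
  have dec: "\<exists>a r. p = True # a @ False # r \<and> dyck a \<and> dyck r" if "p \<in> A_set n" for p
  proof -
    have "dyck p" "length p = 2 * n" using that unfolding A_set_alt by auto
    then have "p \<noteq> []" using assms by auto
    then show ?thesis using dyck_decomp \<open>dyck p\<close> by blast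
  qed
  show "inj_on phi (A_set n)"
  proof (rule inj_onI)
    fix p p' assume pA: "p \<in> A_set n" and pA': "p' \<in> A_set n" and eq: "phi p = phi p'"
    obtain a r where p: "p = True # a @ False # r" "dyck a" "dyck r" using dec pA by blast
    obtain a' r' where p': "p' = True # a' @ False # r'" "dyck a'" "dyck r'" using dec pA' by blast
    have A: "Aprop p" "Aprop p'" using pA pA' unfolding A_set_alt Aprop_def by auto
    have "a @ r = a' @ r'" using eq phi_eq p p' by simp
    then obtain us where "(a = a' @ us \<and> us @ r = r') \<or> (a @ us = a' \<and> r = us @ r')"
      by (auto simp: append_eq_append_conv2)
    then have "a = a' \<and> r = r'"
      using inj_aux[of a r a' r' us] inj_aux[of a' r' a r us] p p' A by auto
    then show "p = p'" using p p' by simp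
  qed
  show "phi ` A_set n = dyck_paths (n - 1)"
  proof safe
    fix p assume pA: "p \<in> A_set n"
    obtain a r where p: "p = True # a @ False # r" "dyck a" "dyck r" using dec pA by blast
    have "length p = 2 * n" using pA unfolding A_set_alt by simp
    then have "length (a @ r) = 2 * (n - 1)" using p by simp
    then show "phi p \<in> dyck_paths (n - 1)" using p phi_eq dyck_append unfolding dp by simp
  next
    fix X assume X: "X \<in> dyck_paths (n - 1)"
    have dX: "dyck X" and lX: "length X = 2 * (n - 1)" using X unfolding dp by auto
    have ne: "X \<noteq> []" using lX assms by auto
    show "X \<in> phi ` A_set n"
    proof (cases "even (td X)")
      case True
      obtain e r where er: "X = e @ r" "dyck e" "even (td e)" "dyck r" "r \<noteq> []" "Aprop r"
        using split_even[OF dX ne True] by blast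
      define p where "p = True # e @ False # r"
      have "Aprop p" using Aprop_cons[OF er(2,4,5)] er p_def by simp
      moreover have "dyck p" using dyck_build er p_def by simp
      moreover have "length p = 2 * n" using lX er assms p_def by simp
      ultimately have "p \<in> A_set n" unfolding A_set_alt Aprop_def by simp
      moreover have "phi p = X" using phi_eq[OF er(2)] er p_def by simp
      ultimately show ?thesis by blast
    next
      case False
      define p where "p = True # X @ [False]"
      have "Aprop p" using Aprop_prime[OF dX] False p_def by simp
      moreover have "dyck p" using dyck_prime dX p_def by simp
      moreover have "length p = 2 * n" using lX assms p_def by simp
      ultimately have "p \<in> A_set n" unfolding A_set_alt Aprop_def by simp
      moreover have "phi p = X" using phi_eq[OF dX, of "[]"] p_def by simp
      ultimately show ?thesis by blast
    qed
  qed
qed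

definition S :: "nat \<Rightarrow> nat \<Rightarrow> bool list set" where
  "S a b = {w. length (filter (\<lambda>s. s) w) = a \<and> length (filter (\<lambda>s. \<not> s) w) = b \<and>
              (\<forall>k \<le> length w. height w k \<ge> 0)}"

lemma dyck_paths_S: "dyck_paths m = S m m"
  unfolding dyck_paths_def dyck_path_def S_def using hsum_count by (auto simp: height_len)

lemma S_len: "w \<in> S a b \<Longrightarrow> length w = a + b"
  unfolding S_def using sum_length_filter_compl[of "\<lambda>s. s" w] by auto

lemma finite_S: "finite (S a b)"
proof -
  have "S a b \<subseteq> {w. set w \<subseteq> UNIV \<and> length w = a + b}" using S_len by auto
  moreover have "finite {w :: bool list. set w \<subseteq> UNIV \<and> length w = a + b}"
    by (rule finite_lists_length_eq) simp
  ultimately show ?thesis by (rule finite_subset)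
qed

lemma S_hsum: "w \<in> S a b \<Longrightarrow> hsum w = int a - int b"
  unfolding S_def using hsum_count by auto

lemma heights_snoc: "(\<forall>k \<le> length (w @ [c]). height (w @ [c]) k \<ge> 0) \<longleftrightarrow>
   (\<forall>k \<le> length w. height w k \<ge> 0) \<and> hsum w + step_val c \<ge> 0"
proof -
  have "(\<forall>k \<le> length (w @ [c]). height (w @ [c]) k \<ge> 0) \<longleftrightarrow>
        (\<forall>k \<le> length w. height (w @ [c]) k \<ge> 0) \<and> height (w @ [c]) (Suc (length w)) \<ge> 0"
    by (auto simp: le_Suc_eq)
  then show ?thesis by (simp add: height_append height_Cons)
qed

lemma S_snoc_T: "w @ [True] \<in> S a b \<longleftrightarrow> a \<ge> 1 \<and> w \<in> S (a - 1) b"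
proof -
  have "(\<forall>k \<le> length w. height w k \<ge> 0) \<Longrightarrow> hsum w \<ge> 0"
    by (metis height_len order_refl)
  then have H: "(\<forall>k \<le> length (w @ [True]). height (w @ [True]) k \<ge> 0) \<longleftrightarrow> (\<forall>k \<le> length w. height w k \<ge> 0)"
    using heights_snoc[of w True] by (auto simp: step_val_def)
  show ?thesis unfolding S_def mem_Collect_eq H by auto
qed

lemma S_snoc_F: "w @ [False] \<in> S a b \<longleftrightarrow> b \<ge> 1 \<and> b \<le> a \<and> w \<in> S a (b - 1)"
proof -
  have H: "(\<forall>k \<le> length (w @ [False]). height (w @ [False]) k \<ge> 0) \<longleftrightarrow> (\<forall>k \<le> length w. height w k \<ge> 0) \<and> hsum w \<ge> 1"
    using heights_snoc[of w False] by (auto simp: step_val_def)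
  have "length (filter (\<lambda>s. s) w) = a \<and> length (filter (\<lambda>s. \<not> s) w) = b - 1 \<and> b \<ge> 1 \<Longrightarrow>
        hsum w = int a - int (b - 1)" using hsum_count[of w] by simp
  then show ?thesis unfolding S_def mem_Collect_eq H by auto
qed

lemma S_split: assumes "0 < a + b"
  shows "S a b = (\<lambda>w. w @ [True]) ` (if a \<ge> 1 then S (a - 1) b else {}) \<union>
                 (\<lambda>w. w @ [False]) ` (if b \<ge> 1 \<and> b \<le> a then S a (b - 1) else {})"
proof safe
  fix w assume w: "w \<in> S a b" "w \<notin> (\<lambda>w. w @ [False]) ` (if b \<ge> 1 \<and> b \<le> a then S a (b - 1) else {})"
  have "w \<noteq> []" using S_len[OF w(1)] assms by auto
  then obtain v c where v: "w = v @ [c]" by (metis rev_exhaust)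
  show "w \<in> (\<lambda>w. w @ [True]) ` (if a \<ge> 1 then S (a - 1) b else {})"
  proof (cases c)
    case True then show ?thesis using w v S_snoc_T by auto
  next
    case False then show ?thesis using w v S_snoc_F by auto
  qed
qed (auto simp: S_snoc_T S_snoc_F split: if_splits)

lemma card_S_rec: assumes "1 \<le> b" "b \<le> a"
  shows "card (S a b) = card (S (a - 1) b) + card (S a (b - 1))"
proof -
  have "card (S a b) = card ((\<lambda>w. w @ [True]) ` S (a - 1) b) + card ((\<lambda>w. w @ [False]) ` S a (b - 1))"
    using S_split[of a b] assms by (simp, intro card_Un_disjoint) (auto intro: finite_S)
  also have "\<dots> = card (S (a - 1) b) + card (S a (b - 1))"
    by (simp add: card_image inj_on_def)
  finally show ?thesis .
qed

lemma S_a0: "S a 0 = {replicate a True}"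
proof safe
  fix w assume w: "w \<in> S a 0"
  have "length w = a" using S_len[OF w] by simp
  moreover have "length (filter (\<lambda>s. \<not> s) w) = 0" using w unfolding S_def by blast
  ultimately have "length (filter (\<lambda>s. \<not> s) w) = 0" "length w = a" by auto
  then show "w = replicate a True"
    by (metis (full_types) filter_empty_conv length_0_conv replicate_length_same)
next
  have "height (replicate a True) k = int (min k a)" for k
    by (simp add: height_hsum hsum_def step_val_def sum_list_replicate)
  then show "replicate a True \<in> S a 0" unfolding S_def by simp
qed

lemma S_empty: "a < b \<Longrightarrow> S a b = {}"
  using S_hsum unfolding S_def
  by (auto, metis height_len less_le_not_le linorder_not_le of_nat_less_iff diff_less_0_iff_less order_refl)

lemma card_S: "b \<le> a + 1 \<Longrightarrow> real (card (S a b)) * (real a + 1) = (real a + 1 - real b) * real ((a + b) choose b)"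
proof (induction "a + b" arbitrary: a b rule: less_induct)
  case less
  consider "b = 0" | "b = a + 1" | "1 \<le> b \<and> b \<le> a" using less.prems by linarith
  then show ?case
  proof cases
    case 1 then show ?thesis by (simp add: S_a0)
  next
    case 2 then show ?thesis by (simp add: S_empty)
  next
    case 3
    define N1 where "N1 = real (card (S (a - 1) b))"
    define N2 where "N2 = real (card (S a (b - 1)))"
    define c where "c = real ((a + b) choose b)"
    define c1 where "c1 = real ((a + b - 1) choose b)"
    define c2 where "c2 = real ((a + b - 1) choose (b - 1))"
    have a1: "real (a - 1) = real a - 1" using 3 by simp
    have IH1: "N1 * real a = (real a - real b) * c1"
      using less.hyps[of "a - 1" b] 3 unfolding N1_def c1_def by (simp add: a1)
    have IH2: "N2 * (real a + 1) = (real a + 2 - real b) * c2"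
    proof -
      have h: "N2 * (real a + 1) = (real a + 1 - real (b - 1)) * real ((a + (b - 1)) choose (b - 1))"
        unfolding N2_def using 3 by (intro less.hyps) auto
      moreover have "real (b - 1) = real b - 1" "a + (b - 1) = a + b - 1" using 3 by auto
      ultimately have "N2 * (real a + 1) = (real a + 1 - (real b - 1)) * c2" unfolding c2_def by simp
      then show ?thesis by (simp add: algebra_simps)
    qed
    have P: "c = c1 + c2"
    proof -
      obtain n k where nk: "a + b = Suc n" "b = Suc k" using 3 by (metis add_Suc_right not0_implies_Suc not_one_le_zero)
      show ?thesis unfolding c_def c1_def c2_def using nk by simp
    qed
    have R: "c1 * real b = c2 * real a"
    proof -
      obtain n k where nk: "a + b = Suc n" "b = Suc k" using 3 by (metis add_Suc_right not0_implies_Suc not_one_le_zero)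
      have "(n choose Suc k) * Suc k = (n choose k) * (n - k)"
        by (metis binomial_absorb_comp binomial_absorption diff_Suc_1 mult.commute Suc_times_binomial_eq
            times_binomial_minus1_eq)
      moreover have "n - k = a" using nk by simp
      ultimately show ?thesis unfolding c1_def c2_def using nk by (metis diff_Suc_1 of_nat_mult)
    qed
    have C: "card (S a b) = card (S (a - 1) b) + card (S a (b - 1))" using card_S_rec 3 by blast
    have "real a * (real (card (S a b)) * (real a + 1)) = real a * ((real a + 1 - real b) * c)"
    proof -
      have "real a * (real (card (S a b)) * (real a + 1)) = (N1 * real a) * (real a + 1) + real a * (N2 * (real a + 1))"
        unfolding C N1_def N2_def by (simp add: algebra_simps)
      also have "\<dots> = (real a - real b) * c1 * (real a + 1) + real a * ((real a + 2 - real b) * c2)"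
        using IH1 IH2 by simp
      also have "\<dots> = real a * ((real a + 1 - real b) * (c1 + c2)) + (c2 * real a - c1 * real b)"
        by (simp add: algebra_simps)
      also have "\<dots> = real a * ((real a + 1 - real b) * c)" using R P by simp
      finally show ?thesis .
    qed
    then show ?thesis using 3 unfolding c_def by simp
  qed
qed

lemma card_dyck: "card (dyck_paths m) = catalan m"
proof -
  have "real (card (S m m)) * (real m + 1) = real ((m + m) choose m)" using card_S[of m m] by simp
  then have "card (S m m) * (m + 1) = (2 * m) choose m"
    by (metis (mono_tags, lifting) mult_2 of_nat_1 of_nat_add of_nat_eq_iff of_nat_mult)
  then show ?thesis unfolding catalan_def dyck_paths_S by (metis add_gr_0 div_mult_self_is_m zero_less_one)
qed

theorem theorem1:
  fixes n :: nat
  assumes "n \<ge> 2"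
  shows "card (A_set n) = catalan (n - 1)"
  using bij_betw_same_card[OF bij_phi[OF assms]] card_dyck by simp

end
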